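(* Let $q$ be a prime power, $1\le k<n\le m$, let $g_1,\dots,g_n\in\mathbb{F}_{q^m}$ be linearly independent over $\mathbb{F}_q$, and let $\mathcal{G}$ be the Gabidulin code of dimension $k$ with respect to $g_1,\dots,g_n$. Then for every $f\in\mathcal{L}_q(x,\mathbb{F}_{q^m})$ with $\deg_q(f)=k$, the word $\sigma_f=(f(g_1),\dots,f(g_n))$ satisfies $d_H(\sigma_f,\mathcal{G})=n-k$, i.e. it is a deep hole of $\mathcal{G}$ in the Hamming metric (the Hamming covering radius of $\mathcal{G}$ being $n-k$). In particular $\mathcal{G}$ has at least $(q^m-1)q^{mk}$ deep holes in the Hamming metric.
   Context: A $q$-linearized polynomial over $\mathbb{F}_{q^m}$ is $L(x)=\sum_{i=0}^{d}a_ix^{q^i}$, $a_i\in\mathbb{F}_{q^m}$; if $a_d\ne0$, $d=\deg_q(L)$. $\mathcal{L}_q(x,\mathbb{F}_{q^m})$ is the set of these. $d_H$ is the Hamming distance, $d_H(\mathbf{u},C)=\min_{\mathbf{c}\in C}d_H(\mathbf{u},\mathbf{c})$; a deep hole in the Hamming metric is a word whose Hamming distance to the code equals the maximum over all words. The Gabidulin code of dimension $k$ with respect to $\mathbb{F}_q$-linearly independent $g_1,\dots,g_n$ is $\mathcal{G}=\{(v(g_1),\dots,v(g_n)) : v\in\mathcal{L}_q(x,\mathbb{F}_{q^m}),\ v=0\text{ or }\deg_q(v)<k\}$. *)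

theory Defs
  imports Main "HOL-Computational_Algebra.Primes"
begin

definition is_subfield :: "'a::field set \<Rightarrow> bool" where
  "is_subfield K \<longleftrightarrow> 0 \<in> K \<and> 1 \<in> K \<and>
     (\<forall>x\<in>K. \<forall>y\<in>K. x + y \<in> K \<and> x * y \<in> K) \<and>
     (\<forall>x\<in>K. - x \<in> K) \<and> (\<forall>x\<in>K. x \<noteq> 0 \<longrightarrow> inverse x \<in> K)"

definition prime_power :: "nat \<Rightarrow> bool" where
  "prime_power q \<longleftrightarrow> (\<exists>p e. prime p \<and> e \<ge> 1 \<and> q = p ^ e)"

text \<open>q-linearized polynomials: finitely supported coefficient sequences a,
  representing L(x) = sum_i a_i x^(q^i).\<close>
definition linpolys :: "(nat \<Rightarrow> 'a::field) set" where
  "linpolys = {a. finite {i. a i \<noteq> 0}}"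

definition lin_eval :: "nat \<Rightarrow> (nat \<Rightarrow> 'a::field) \<Rightarrow> 'a \<Rightarrow> 'a" where
  "lin_eval q a x = (\<Sum>i\<in>{i. a i \<noteq> 0}. a i * x ^ (q ^ i))"

definition qdeg :: "(nat \<Rightarrow> 'a::field) \<Rightarrow> nat" where
  "qdeg a = Max {i. a i \<noteq> 0}"

definition lin_indep_over :: "'a::field set \<Rightarrow> 'a list \<Rightarrow> bool" where
  "lin_indep_over K g \<longleftrightarrow>
     (\<forall>c. (\<forall>i<length g. c i \<in> K) \<longrightarrow> (\<Sum>i<length g. c i * g ! i) = 0 \<longrightarrow>
          (\<forall>i<length g. c i = 0))"

definition eval_word :: "nat \<Rightarrow> (nat \<Rightarrow> 'a::field) \<Rightarrow> 'a list \<Rightarrow> 'a list" where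
  "eval_word q v g = map (lin_eval q v) g"

definition gabidulin :: "nat \<Rightarrow> nat \<Rightarrow> 'a::field list \<Rightarrow> 'a list set" where
  "gabidulin q k g = {eval_word q v g | v. v \<in> linpolys \<and> (v = (\<lambda>_. 0) \<or> qdeg v < k)}"

definition hamming_dist :: "'a list \<Rightarrow> 'a list \<Rightarrow> nat" where
  "hamming_dist u v = card {i. i < length u \<and> u ! i \<noteq> v ! i}"

definition dist_to_code :: "'a list \<Rightarrow> 'a list set \<Rightarrow> nat" where
  "dist_to_code u C = Min ((\<lambda>c. hamming_dist u c) ` C)"

definition words :: "nat \<Rightarrow> 'a list set" where
  "words n = {w. length w = n}"

definition covering_radius :: "nat \<Rightarrow> 'a list set \<Rightarrow> nat" where
  "covering_radius n C = Max ((\<lambda>w. dist_to_code w C) ` words n)"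

definition deep_hole :: "nat \<Rightarrow> 'a list set \<Rightarrow> 'a list \<Rightarrow> bool" where
  "deep_hole n C u \<longleftrightarrow> u \<in> words n \<and> dist_to_code u C = covering_radius n C"

end

theory Submission
  imports Defs "HOL-Computational_Algebra.Polynomial" "HOL-Library.FuncSet"
begin


lemma lin_eval_sum:
  assumes "\<And>i. i > D \<Longrightarrow> a i = 0"
  shows "lin_eval q a x = (\<Sum>i\<le>D. a i * x ^ (q ^ i))"
  unfolding lin_eval_def
proof (rule sum.mono_neutral_left)
  show "{i. a i \<noteq> 0} \<subseteq> {..D}" using assms by (auto simp: not_le[symmetric])
qed auto

lemma root_bound:
  fixes a :: "nat \<Rightarrow> 'a::field"
  assumes q: "q \<ge> 2" and supp: "\<And>i. i > D \<Longrightarrow> a i = 0" and nz: "a j \<noteq> 0"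
  shows "card {x. lin_eval q a x = 0} \<le> q ^ D"
proof -
  define p where "p = (\<Sum>i\<le>D. monom (a i) (q ^ i))"
  have ev: "poly p x = lin_eval q a x" for x
    by (simp add: p_def poly_sum poly_monom lin_eval_sum[OF supp])
  have jD: "j \<le> D" using supp nz by (meson not_le)
  have inj: "inj (\<lambda>i. q ^ i)" using q by (simp add: inj_on_def power_inject_exp)
  have "coeff p (q ^ j) = (\<Sum>i\<le>D. if q ^ i = q ^ j then a i else 0)"
    by (simp add: p_def coeff_sum)
  also have "\<dots> = (\<Sum>i\<le>D. if i = j then a i else 0)"
    using inj by (intro sum.cong) (auto dest: injD)
  also have "\<dots> = a j" using jD by simp
  finally have "p \<noteq> 0" using nz by auto
  hence "card {x. poly p x = 0} \<le> degree p" by (rule card_poly_roots_bound)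
  also have "degree p \<le> q ^ D"
    unfolding p_def
    by (rule degree_sum_le) (use q in \<open>auto intro!: order.trans[OF degree_monom_le] power_increasing\<close>)
  finally show ?thesis by (simp add: ev)
qed

lemma subfield_pow_q:
  fixes K :: "'a::field set"
  assumes K: "is_subfield K" "finite K" and c: "c \<in> K"
  shows "c ^ card K = c"
proof (cases "c = 0")
  case True
  have "0 \<in> K" "1 \<in> K" "(0::'a) \<noteq> 1" using K unfolding is_subfield_def by auto
  hence "card K \<noteq> 0" using K(2) by (metis card_0_eq empty_iff)
  thus ?thesis using True by simp
next
  case False
  have cl: "\<And>x y. x \<in> K \<Longrightarrow> y \<in> K \<Longrightarrow> x * y \<in> K" and inv: "\<And>x. x \<in> K \<Longrightarrow> x \<noteq> 0 \<Longrightarrow> inverse x \<in> K"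
    using K unfolding is_subfield_def by auto
  have "(\<Prod>y\<in>K-{0}. c * y) = (\<Prod>y\<in>K-{0}. y)"
    by (rule prod.reindex_bij_witness[of _ "\<lambda>y. y / c" "\<lambda>y. c * y"])
       (use False c in \<open>auto simp: cl inv divide_inverse\<close>)
  moreover have "(\<Prod>y\<in>K-{0}. c * y) = c ^ card (K - {0}) * (\<Prod>y\<in>K-{0}. y)"
    by (simp add: prod.distrib)
  moreover have "(\<Prod>y\<in>K-{0}. y) \<noteq> 0" using K(2) by simp
  ultimately have "c ^ card (K - {0}) = 1" by simp
  moreover have "card K = Suc (card (K - {0}))"
    using K unfolding is_subfield_def by (metis card_Suc_Diff1 finite_Diff)
  ultimately show ?thesis by simp
qed

lemma subfield_char:
  fixes K :: "'a::field set"
  assumes K: "is_subfield K" "finite K"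
  shows "of_nat (card K) = (0::'a)"
proof -
  have cl: "\<And>x y. x \<in> K \<Longrightarrow> y \<in> K \<Longrightarrow> x + y \<in> K" and neg: "\<And>x. x \<in> K \<Longrightarrow> - x \<in> K"
    and one: "1 \<in> K"
    using K unfolding is_subfield_def by auto
  have "(\<Sum>y\<in>K. 1 + y) = (\<Sum>y\<in>K. y)"
    by (rule sum.reindex_bij_witness[of _ "\<lambda>y. y + - 1" "\<lambda>y. 1 + y"])
       (use cl neg one in \<open>auto simp: add.commute\<close>, metis cl neg one diff_conv_add_uminus)
  moreover have "(\<Sum>y\<in>K. 1 + y) = of_nat (card K) + (\<Sum>y\<in>K. y)"
    by (simp add: sum.distrib)
  ultimately show ?thesis by simp
qed

lemma frob_setup:
  fixes K :: "'a::{field,finite} set"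
  assumes pp: "prime_power q" and K: "is_subfield K" and cK: "card K = q"
  shows "(x + y :: 'a) ^ (q ^ i) = x ^ (q ^ i) + y ^ (q ^ i)"
    and "c \<in> K \<Longrightarrow> c ^ (q ^ i) = c"
proof -
  obtain p e where p: "prime p" "e \<ge> 1" "q = p ^ e" using pp unfolding prime_power_def by auto
  have fin: "finite K" by simp
  have "of_nat q = (0::'a)" using subfield_char[OF K fin] cK by simp
  hence d: "CHAR('a) dvd p ^ e" using p of_nat_eq_0_iff_char_dvd by metis
  have pc: "prime CHAR('a)"
    using finite_imp_CHAR_pos[where 'a='a] prime_CHAR_semidom by auto
  have "CHAR('a) dvd p" using d pc prime_dvd_power by blast
  hence cp: "CHAR('a) = p" using pc p(1) primes_dvd_imp_eq by blast
  have "q ^ i = CHAR('a) ^ (e * i)" using p cp by (simp add: power_mult)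
  thus "(x + y :: 'a) ^ (q ^ i) = x ^ (q ^ i) + y ^ (q ^ i)"
    using freshmans_dream'[OF pc] by blast
  assume c: "c \<in> K"
  show "c ^ (q ^ i) = c"
  proof (induction i)
    case (Suc i)
    have "c ^ (q ^ Suc i) = (c ^ (q ^ i)) ^ q" by (metis power_Suc2 power_mult)
    thus ?case using Suc subfield_pow_q[OF K fin c] cK by simp
  qed simp
qed

lemma additive_sum:
  fixes L :: "'a::field \<Rightarrow> 'a"
  assumes add: "\<And>x y. L (x + y) = L x + L y"
  shows "L (sum f A) = (\<Sum>i\<in>A. L (f i))"
proof -
  have "L 0 + L 0 = L 0 + 0" using add[of 0 0] by simp
  hence L0: "L 0 = 0" by (rule add_left_imp_eq)
  show ?thesis by (induction A rule: infinite_finite_induct) (auto simp: L0 add)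
qed

lemma span_roots:
  fixes L :: "'a::field \<Rightarrow> 'a" and K :: "'a set"
  assumes add: "\<And>x y. L (x + y) = L x + L y"
    and hom: "\<And>c x. c \<in> K \<Longrightarrow> L (c * x) = c * L x"
    and K: "is_subfield K"
    and ind: "lin_indep_over K g"
    and I: "I \<subseteq> {..<length g}"
    and rt: "\<And>i. i \<in> I \<Longrightarrow> L (g ! i) = 0"
    and fin: "finite {x. L x = 0}"
  shows "card K ^ card I \<le> card {x. L x = 0}"
proof -
  have finI: "finite I" using I finite_subset by blast
  define \<Phi> where "\<Phi> c = (\<Sum>i\<in>I. c i * g ! i)" for c
  have cl: "\<And>x y. x \<in> K \<Longrightarrow> y \<in> K \<Longrightarrow> x - y \<in> K"
    using K unfolding is_subfield_def by (metis diff_conv_add_uminus)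
  have "inj_on \<Phi> (PiE I (\<lambda>_. K))"
  proof (rule inj_onI)
    fix c d assume c: "c \<in> PiE I (\<lambda>_. K)" and d: "d \<in> PiE I (\<lambda>_. K)" and eq: "\<Phi> c = \<Phi> d"
    define e where "e i = (if i \<in> I then c i - d i else 0)" for i
    have "(\<Sum>i<length g. e i * g ! i) = (\<Sum>i\<in>I. e i * g ! i)"
      by (rule sum.mono_neutral_right) (use I in \<open>auto simp: e_def\<close>)
    also have "\<dots> = \<Phi> c - \<Phi> d"
      by (simp add: \<Phi>_def e_def sum_subtractf[symmetric] algebra_simps)
    finally have "(\<Sum>i<length g. e i * g ! i) = 0" using eq by simp
    moreover have "\<forall>i<length g. e i \<in> K"
      using PiE_mem[OF c] PiE_mem[OF d] K cl unfolding e_def is_subfield_def by auto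
    ultimately have "\<forall>i<length g. e i = 0" using ind unfolding lin_indep_over_def by blast
    hence "\<forall>i\<in>I. c i = d i" using I unfolding e_def by auto
    thus "c = d" using c d by (auto intro: PiE_ext)
  qed
  moreover have "\<Phi> ` PiE I (\<lambda>_. K) \<subseteq> {x. L x = 0}"
    using rt by (auto simp: \<Phi>_def additive_sum[OF add] intro!: sum.neutral) (metis PiE_mem hom mult_zero_right)
  ultimately have "card (PiE I (\<lambda>_. K)) \<le> card {x. L x = 0}"
    using fin by (metis card_image card_mono)
  thus ?thesis using finI by (simp add: card_PiE)
qed

lemma lin_eval_diff:
  assumes "\<And>i. i > D \<Longrightarrow> a i = 0" "\<And>i. i > D \<Longrightarrow> b i = 0"
  shows "lin_eval q (\<lambda>i. a i - b i) x = lin_eval q a x - lin_eval q b x"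
  using assms by (simp add: lin_eval_sum[of D] sum_subtractf left_diff_distrib)

lemma qdeg_props:
  fixes f :: "nat \<Rightarrow> 'a::field"
  assumes "f \<in> linpolys" "f \<noteq> (\<lambda>_. 0)"
  shows "\<And>i. i > qdeg f \<Longrightarrow> f i = 0" "f (qdeg f) \<noteq> 0"
proof -
  have fin: "finite {i. f i \<noteq> 0}" using assms unfolding linpolys_def by auto
  have ne: "{i. f i \<noteq> 0} \<noteq> {}" using assms(2) by auto
  show "\<And>i. i > qdeg f \<Longrightarrow> f i = 0" unfolding qdeg_def using Max_ge[OF fin] by force
  show "f (qdeg f) \<noteq> 0" unfolding qdeg_def using Max_in[OF fin ne] by simp
qed

definition T :: "nat \<Rightarrow> (nat \<Rightarrow> 'b::zero) set" where
  "T D = {v. \<forall>i\<ge>D. v i = 0}"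

lemma words_eq: "words n = {xs. set xs \<subseteq> UNIV \<and> length xs = n}"
  unfolding words_def by auto

lemma finite_words: "finite (words n :: 'b::finite list set)"
  unfolding words_eq by (rule finite_lists_length_eq) simp

lemma card_words: "card (words n :: 'b::finite list set) = card (UNIV :: 'b set) ^ n"
  unfolding words_eq by (rule card_lists_length_eq) simp

lemma card_T: "card (T D :: (nat \<Rightarrow> 'b::{zero,finite}) set) = card (UNIV::'b set) ^ D"
proof -
  have "bij_betw (\<lambda>v. map v [0..<D]) (T D :: (nat \<Rightarrow> 'b) set) (words D)"
    by (rule bij_betw_byWitness[where f'="\<lambda>xs i. if i < D then xs!i else 0"])
       (auto simp: T_def words_def fun_eq_iff intro: nth_equalityI)
  hence "card (T D :: (nat \<Rightarrow> 'b) set) = card (words D :: 'b list set)" by (rule bij_betw_same_card)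
  thus ?thesis by (simp add: card_words)
qed

lemma qdeg_eq:
  fixes f :: "nat \<Rightarrow> 'b::field"
  assumes "\<And>i. i > k \<Longrightarrow> f i = 0" "f k \<noteq> 0"
  shows "f \<in> linpolys" "f \<noteq> (\<lambda>_. 0)" "qdeg f = k"
proof -
  have sub: "{i. f i \<noteq> 0} \<subseteq> {..k}" using assms(1) by (auto simp: not_le[symmetric])
  hence fin: "finite {i. f i \<noteq> 0}" by (rule finite_subset) simp
  thus "f \<in> linpolys" by (simp add: linpolys_def)
  show "f \<noteq> (\<lambda>_. 0)" using assms(2) by auto
  show "qdeg f = k" unfolding qdeg_def
    by (rule Max_eqI[OF fin]) (use sub assms(2) in auto)
qed

locale gab =
  fixes K :: "'a::{field,finite} set" and q m n k :: nat and g :: "'a list"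
  assumes pp: "prime_power q"
    and sub: "is_subfield K" and cK: "card K = q"
    and cU: "card (UNIV :: 'a set) = q ^ m"
    and k1: "1 \<le> k" and kn: "k < n" and nm: "n \<le> m"
    and len: "length g = n" and ind: "lin_indep_over K g"
begin

lemma q2: "q \<ge> 2"
proof -
  obtain p e where p: "prime p" "e \<ge> 1" "q = p ^ e" using pp unfolding prime_power_def by auto
  have "p \<le> p ^ e" using p prime_gt_0_nat[of p] by (intro self_le_power) auto
  moreover have "2 \<le> p" using p(1) by (rule prime_ge_2_nat)
  ultimately show ?thesis using p(3) by linarith
qed

lemma key:
  fixes h :: "nat \<Rightarrow> 'a"
  assumes supp: "\<And>i. i > D \<Longrightarrow> h i = 0" and nz: "h j \<noteq> 0"
    and I: "I \<subseteq> {..<n}" and rt: "\<And>i. i \<in> I \<Longrightarrow> lin_eval q h (g ! i) = 0"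
  shows "card I \<le> D"
proof -
  have add: "lin_eval q h (x + y) = lin_eval q h x + lin_eval q h y" for x y
    by (simp add: lin_eval_sum[OF supp] frob_setup(1)[OF pp sub cK] sum.distrib distrib_left)
  have hom: "lin_eval q h (c * x) = c * lin_eval q h x" if "c \<in> K" for c x
  proof -
    have "lin_eval q h (c * x) = (\<Sum>i\<le>D. h i * (c * x) ^ (q ^ i))"
      by (rule lin_eval_sum[OF supp])
    also have "\<dots> = (\<Sum>i\<le>D. c * (h i * x ^ (q ^ i)))"
      by (rule sum.cong, simp,
          simp only: power_mult_distrib frob_setup(2)[OF pp sub cK that] mult.left_commute)
    also have "\<dots> = c * (\<Sum>i\<le>D. h i * x ^ (q ^ i))" by (simp only: sum_distrib_left)
    also have "\<dots> = c * lin_eval q h x" by (simp only: lin_eval_sum[OF supp])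
    finally show ?thesis .
  qed
  have "card K ^ card I \<le> card {x. lin_eval q h x = 0}"
    by (rule span_roots[OF add hom sub ind]) (simp_all add: len I rt)
  also have "\<dots> \<le> q ^ D" by (rule root_bound[where a=h, OF q2 supp nz])
  finally have "q ^ card I \<le> q ^ D" using cK by simp
  moreover have "1 < q" using q2 by simp
  ultimately show ?thesis using power_le_imp_le_exp by blast
qed


definition \<Phi> :: "(nat \<Rightarrow> 'a) \<Rightarrow> 'a list" where
  "\<Phi> v = map (\<lambda>i. lin_eval q v (g ! i)) [0..<k]"

lemma interp:
  assumes w: "w \<in> words k"
  shows "\<exists>v\<in>T k. \<Phi> v = w"
proof -
  have inj: "inj_on \<Phi> (T k)"
  proof (rule inj_onI, rule ccontr)
    fix v v' assume v: "v \<in> T k" and v': "v' \<in> T k" and eq: "\<Phi> v = \<Phi> v'" and ne: "v \<noteq> v'"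
    then obtain j where j: "v j \<noteq> v' j" by auto
    define h where "h i = v i - v' i" for i
    have supp: "\<And>i. i > k - 1 \<Longrightarrow> h i = 0" using v v' k1 by (auto simp: h_def T_def)
    have hj: "h j \<noteq> 0" using j by (simp add: h_def)
    have rt: "lin_eval q h (g ! i) = 0" if "i \<in> {..<k}" for i
    proof -
      have "\<Phi> v ! i = \<Phi> v' ! i" using eq by simp
      hence "lin_eval q v (g ! i) = lin_eval q v' (g ! i)" using that by (simp add: \<Phi>_def)
      moreover have "lin_eval q h (g ! i) = lin_eval q v (g ! i) - lin_eval q v' (g ! i)"
        unfolding h_def by (rule lin_eval_diff[where D="k - 1"]) (use v v' k1 in \<open>auto simp: T_def\<close>)
      ultimately show ?thesis by simp
    qed
    have "card {..<k} \<le> k - 1" by (rule key[OF supp hj _ rt]) (use kn in auto)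
    thus False using k1 by simp
  qed
  have sub: "\<Phi> ` T k \<subseteq> words k" by (auto simp: \<Phi>_def words_def)
  have "card (\<Phi> ` T k) = card (words k :: 'a list set)"
    using card_image[OF inj] by (simp add: card_T card_words)
  hence "\<Phi> ` T k = words k" using card_subset_eq[OF finite_words sub] by simp
  hence "w \<in> \<Phi> ` T k" using w by simp
  thus ?thesis by blast
qed

lemma lower:
  assumes f: "f \<in> linpolys" "f \<noteq> (\<lambda>_. 0)" "qdeg f = k" and c: "c \<in> gabidulin q k g"
  shows "n - k \<le> hamming_dist (eval_word q f g) c"
proof -
  obtain v where cv: "c = eval_word q v g" and v: "v \<in> linpolys" "v = (\<lambda>_. 0) \<or> qdeg v < k"
    using c unfolding gabidulin_def by auto
  have vs: "v i = 0" if "i \<ge> k" for i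
  proof (cases "v = (\<lambda>_. 0)")
    case False thus ?thesis using v qdeg_props(1)[OF v(1) False, of i] that by auto
  qed simp
  have fs: "\<And>i. i > k \<Longrightarrow> f i = 0" using qdeg_props(1)[OF f(1,2)] f(3) by auto
  have fk: "f k \<noteq> 0" using qdeg_props(2)[OF f(1,2)] f(3) by auto
  define h where "h i = f i - v i" for i
  have supp: "\<And>i. i > k \<Longrightarrow> h i = 0" using fs vs by (simp add: h_def)
  have hk: "h k \<noteq> 0" using fk vs[of k] by (simp add: h_def)
  define I where "I = {i. i < n \<and> eval_word q f g ! i = c ! i}"
  have rt: "lin_eval q h (g ! i) = 0" if "i \<in> I" for i
  proof -
    have "lin_eval q f (g ! i) = lin_eval q v (g ! i)"
      using that len by (auto simp: I_def cv eval_word_def)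
    moreover have "lin_eval q h (g ! i) = lin_eval q f (g ! i) - lin_eval q v (g ! i)"
      unfolding h_def by (rule lin_eval_diff[where D=k]) (use fs vs in auto)
    ultimately show ?thesis by simp
  qed
  have IS: "I \<subseteq> {..<n}" by (auto simp: I_def)
  have cI: "card I \<le> k" by (rule key[OF supp hk IS rt])
  have "{i. i < length (eval_word q f g) \<and> eval_word q f g ! i \<noteq> c ! i} = {..<n} - I"
    using len by (auto simp: I_def eval_word_def)
  hence "hamming_dist (eval_word q f g) c = n - card I"
    using IS by (simp add: hamming_dist_def card_Diff_subset finite_subset)
  thus ?thesis using cI by simp
qed

lemma upper:
  assumes w: "length w = n"
  shows "\<exists>c\<in>gabidulin q k g. hamming_dist w c \<le> n - k"
proof -
  have "take k w \<in> words k" using w kn by (simp add: words_def)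
  then obtain v where v: "v \<in> T k" and vw: "\<Phi> v = take k w" using interp by blast
  have sub: "{i. v i \<noteq> 0} \<subseteq> {..<k}" using v by (auto simp: T_def not_le[symmetric])
  hence fin: "finite {i. v i \<noteq> 0}" by (rule finite_subset) simp
  have vl: "v \<in> linpolys" using fin by (simp add: linpolys_def)
  have "v = (\<lambda>_. 0) \<or> qdeg v < k"
  proof (cases "v = (\<lambda>_. 0)")
    case False
    hence "{i. v i \<noteq> 0} \<noteq> {}" by auto
    hence "qdeg v \<in> {i. v i \<noteq> 0}" unfolding qdeg_def using Max_in fin by blast
    thus ?thesis using sub by auto
  qed simp
  hence cG: "eval_word q v g \<in> gabidulin q k g" using vl unfolding gabidulin_def by blast
  have "{i. i < length w \<and> w ! i \<noteq> eval_word q v g ! i} \<subseteq> {k..<n}"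
  proof
    fix i assume i: "i \<in> {i. i < length w \<and> w ! i \<noteq> eval_word q v g ! i}"
    have "\<not> i < k"
    proof
      assume ik: "i < k"
      have "\<Phi> v ! i = take k w ! i" using vw by simp
      hence "lin_eval q v (g ! i) = w ! i" using ik by (simp add: \<Phi>_def)
      moreover have "eval_word q v g ! i = lin_eval q v (g ! i)"
        using i w len by (simp add: eval_word_def)
      ultimately show False using i by simp
    qed
    thus "i \<in> {k..<n}" using i w by simp
  qed
  hence "hamming_dist w (eval_word q v g) \<le> n - k"
    unfolding hamming_dist_def by (metis card_atLeastLessThan card_mono finite_atLeastLessThan)
  thus ?thesis using cG by blast
qed

lemma finite_code: "finite (gabidulin q k g)"
proof (rule finite_subset[OF _ finite_words[of n]])
  show "gabidulin q k g \<subseteq> words n" using len by (auto simp: gabidulin_def eval_word_def words_def)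
qed

lemma zero_in_code: "eval_word q (\<lambda>_. 0) g \<in> gabidulin q k g"
  unfolding gabidulin_def linpolys_def by auto

lemma dist_upper:
  assumes "length w = n" shows "dist_to_code w (gabidulin q k g) \<le> n - k"
proof -
  obtain c where c: "c \<in> gabidulin q k g" "hamming_dist w c \<le> n - k" using upper[OF assms] by blast
  have "dist_to_code w (gabidulin q k g) \<le> hamming_dist w c"
    unfolding dist_to_code_def using c(1) finite_code by (intro Min_le) auto
  thus ?thesis using c(2) by simp
qed

lemma dist_sigma:
  assumes f: "f \<in> linpolys" "f \<noteq> (\<lambda>_. 0)" "qdeg f = k"
  shows "dist_to_code (eval_word q f g) (gabidulin q k g) = n - k"
proof (rule antisym)
  show "dist_to_code (eval_word q f g) (gabidulin q k g) \<le> n - k"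
    by (rule dist_upper) (simp add: eval_word_def len)
  show "n - k \<le> dist_to_code (eval_word q f g) (gabidulin q k g)"
    unfolding dist_to_code_def using finite_code zero_in_code lower[OF f]
    by (subst Min_ge_iff) auto
qed

lemma cov: "covering_radius n (gabidulin q k g) = n - k"
proof -
  define f0 :: "nat \<Rightarrow> 'a" where "f0 i = (if i = k then 1 else 0)" for i
  have f0: "f0 \<in> linpolys" "f0 \<noteq> (\<lambda>_. 0)" "qdeg f0 = k"
    using qdeg_eq[of k f0] by (auto simp: f0_def)
  have "eval_word q f0 g \<in> words n" by (simp add: eval_word_def words_def len)
  show ?thesis unfolding covering_radius_def
  proof (rule Max_eqI)
    show "finite ((\<lambda>w. dist_to_code w (gabidulin q k g)) ` words n)" by (intro finite_imageI finite_words)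
    show "y \<le> n - k" if "y \<in> (\<lambda>w. dist_to_code w (gabidulin q k g)) ` words n" for y
      using that dist_upper by (auto simp: words_def)
    show "n - k \<in> (\<lambda>w. dist_to_code w (gabidulin q k g)) ` words n"
      using dist_sigma[OF f0] \<open>eval_word q f0 g \<in> words n\<close> by (metis image_eqI)
  qed
qed

lemma count: "card {u. deep_hole n (gabidulin q k g) u} \<ge> (q ^ m - 1) * q ^ (m * k)"
proof -
  define S where "S = (\<lambda>(a, v). v(k := a)) ` ((UNIV - {0::'a}) \<times> T k)"
  have injS: "inj_on (\<lambda>(a, v). v(k := a)) ((UNIV - {0::'a}) \<times> T k)"
  proof (rule inj_onI)
    fix x y assume x: "x \<in> (UNIV - {0::'a}) \<times> T k" and y: "y \<in> (UNIV - {0::'a}) \<times> T k"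
      and eq0: "(case x of (a, v) \<Rightarrow> v(k := a)) = (case y of (a, v) \<Rightarrow> v(k := a))"
    obtain a v where xa: "x = (a, v)" by (cases x)
    obtain a' v' where ya: "y = (a', v')" by (cases y)
    have v: "v \<in> T k" and v': "v' \<in> T k" using x y xa ya by auto
    have eq: "v(k := a) = v'(k := a')" using eq0 xa ya by simp
    have "a = a'" using fun_cong[OF eq, of k] by simp
    moreover have "v = v'"
    proof
      fix i show "v i = v' i"
        using fun_cong[OF eq, of i] v v' by (cases "i = k") (auto simp: T_def)
    qed
    ultimately show "x = y" using xa ya by simp
  qed
  have cS: "card S = (q ^ m - 1) * q ^ (m * k)"
    unfolding S_def using card_image[OF injS]
    by (simp add: card_cartesian_product card_T cU card_Diff_singleton power_mult)
  have Sf: "(\<forall>i>k. f i = 0) \<and> f \<in> linpolys \<and> f \<noteq> (\<lambda>_. 0) \<and> qdeg f = k" if "f \<in> S" for f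
  proof -
    from that obtain x where x: "x \<in> (UNIV - {0::'a}) \<times> T k" and fx: "f = (\<lambda>(a, v). v(k := a)) x"
      unfolding S_def by (rule imageE)
    obtain a v where "x = (a, v)" by (cases x)
    hence "a \<noteq> 0" "v \<in> T k" "f = v(k := a)" using x fx by auto
    hence "\<And>i. i > k \<Longrightarrow> f i = 0" "f k \<noteq> 0" by (auto simp: T_def)
    thus ?thesis using qdeg_eq[of k f] by blast
  qed
  define \<sigma> where "\<sigma> f = eval_word q f g" for f
  have injs: "inj_on \<sigma> S"
  proof (rule inj_onI, rule ccontr)
    fix f f' assume f: "f \<in> S" and f': "f' \<in> S" and eq: "\<sigma> f = \<sigma> f'" and ne: "f \<noteq> f'"
    then obtain j where j: "f j \<noteq> f' j" by auto
    define h where "h i = f i - f' i" for i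
    have fs: "\<And>i. i > k \<Longrightarrow> f i = 0" "\<And>i. i > k \<Longrightarrow> f' i = 0"
      using Sf[OF f] Sf[OF f'] by blast+
    have supp: "\<And>i. i > k \<Longrightarrow> h i = 0" using fs by (simp add: h_def)
    have hj: "h j \<noteq> 0" using j by (simp add: h_def)
    have rt: "lin_eval q h (g ! i) = 0" if "i \<in> {..<n}" for i
    proof -
      have "\<sigma> f ! i = \<sigma> f' ! i" using eq by simp
      hence "lin_eval q f (g ! i) = lin_eval q f' (g ! i)" using that len by (simp add: \<sigma>_def eval_word_def)
      moreover have "lin_eval q h (g ! i) = lin_eval q f (g ! i) - lin_eval q f' (g ! i)"
        unfolding h_def by (rule lin_eval_diff[where D=k]) (use fs in auto)
      ultimately show ?thesis by simp
    qed
    have "card {..<n} \<le> k" by (rule key[OF supp hj _ rt]) auto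
    thus False using kn by simp
  qed
  have sub: "\<sigma> ` S \<subseteq> {u. deep_hole n (gabidulin q k g) u}"
    using Sf dist_sigma cov len by (auto simp: deep_hole_def \<sigma>_def eval_word_def words_def)
  have fin: "finite {u. deep_hole n (gabidulin q k g) u}"
    by (rule finite_subset[OF _ finite_words[of n]]) (auto simp: deep_hole_def)
  have "card S = card (\<sigma> ` S)" using card_image[OF injs] by simp
  also have "\<dots> \<le> card {u. deep_hole n (gabidulin q k g) u}" by (rule card_mono[OF fin sub])
  finally show ?thesis using cS by simp
qed

end


theorem mainTheorem5:
  fixes K :: "'a::{field,finite} set" and q m n k :: nat and g :: "'a list"
  assumes "prime_power q"
    and "is_subfield K" and "card K = q"
    and "card (UNIV :: 'a set) = q ^ m"
    and "1 \<le> k" and "k < n" and "n \<le> m"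
    and "length g = n" and "lin_indep_over K g"
  shows "(\<forall>f\<in>linpolys. f \<noteq> (\<lambda>_. 0) \<and> qdeg f = k \<longrightarrow>
            dist_to_code (eval_word q f g) (gabidulin q k g) = n - k \<and>
            deep_hole n (gabidulin q k g) (eval_word q f g))
         \<and> covering_radius n (gabidulin q k g :: 'a list set) = n - k
         \<and> card {u. deep_hole n (gabidulin q k g) u} \<ge> (q ^ m - 1) * q ^ (m * k)"
proof -
  interpret gab K q m n k g using assms by unfold_locales
  show ?thesis
  proof (intro conjI ballI impI)
    show "covering_radius n (gabidulin q k g :: 'a list set) = n - k" by (rule cov)
    show "card {u. deep_hole n (gabidulin q k g) u} \<ge> (q ^ m - 1) * q ^ (m * k)" by (rule count)
  next
    fix f :: "nat \<Rightarrow> 'a" assume f: "f \<in> linpolys" and h: "f \<noteq> (\<lambda>_. 0) \<and> qdeg f = k"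
    show "dist_to_code (eval_word q f g) (gabidulin q k g) = n - k"
      using dist_sigma f h by blast
    show "deep_hole n (gabidulin q k g) (eval_word q f g)"
      unfolding deep_hole_def using dist_sigma f h cov len by (auto simp: words_def eval_word_def)
  qed
qed

end
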